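(* Let $\Omega\subset\mathbb{R}^N$ ($N\ge2$) be a bounded smooth domain, $1<q<2<p$ with $p<\frac{2N}{N-2}$ if $N\ge3$, $a,b\in C^\alpha(\overline\Omega)$, and assume $\int_\Omega a<0$ or $\int_\Omega b<0$. Then for $0<\lambda<\lambda_0$ we have $I_\lambda(u)>0$ for every $u\in N_\lambda^-$.
   Context: $E(u)=\int_\Omega|\nabla u|^2$, $A(u)=\int_\Omega a|u|^p$, $B(u)=\int_\Omega b|u|^q$ on $H^1(\Omega)$; $I_\lambda=\frac12E-\frac1pA-\frac\lambda qB$. $N_\lambda=\{u\ne0:E(u)=A(u)+\lambda B(u)\}$, $N_\lambda^-=\{u\in N_\lambda:E(u)>\lambda\frac{p-q}{p-2}B(u)\}$. $C_{pq}=\frac{q(p-2)}{2(p-q)}\left(\frac{p(2-q)}{2(p-q)}\right)^{\frac{2-q}{p-2}}$, $\lambda_0=\inf\{E(u)^{\frac{p-q}{p-2}}:E(u)>0,A(u)>0,B(u)>0,\ C_{pq}^{-1}B(u)A(u)^{\frac{2-q}{p-2}}=1\}$ ($\inf\emptyset=\infty$). *)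

theory Defs
  imports "HOL-Analysis.Analysis"
begin

definition pd :: "'n::finite \<Rightarrow> (real^'n \<Rightarrow> real) \<Rightarrow> real^'n \<Rightarrow> real" where
  "pd i f x = (THE d. ((\<lambda>t. f (x + t *\<^sub>R axis i 1)) has_real_derivative d) (at 0))"

primrec Ck :: "nat \<Rightarrow> (real^'n::finite \<Rightarrow> real) \<Rightarrow> (real^'n) set \<Rightarrow> bool" where
  "Ck 0 f U = continuous_on U f"
| "Ck (Suc k) f U = (continuous_on U f \<and>
     (\<forall>i. \<forall>x\<in>U. ((\<lambda>t. f (x + t *\<^sub>R axis i 1)) has_real_derivative pd i f x) (at 0)) \<and>
     (\<forall>i. Ck k (pd i f) U))"

definition Cinf :: "(real^'n::finite \<Rightarrow> real) \<Rightarrow> (real^'n) set \<Rightarrow> bool" where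
  "Cinf f U = (\<forall>k. Ck k f U)"

definition smooth_boundary :: "(real^'n::finite) set \<Rightarrow> bool" where
  "smooth_boundary \<Omega> = (\<forall>x0\<in>frontier \<Omega>. \<exists>r>0. \<exists>(T::real^'n \<Rightarrow> real^'n) (k::'n) (\<gamma>::real^'n \<Rightarrow> real).
      orthogonal_transformation T \<and> Cinf \<gamma> UNIV \<and>
      (\<forall>y z. (\<forall>j. j \<noteq> k \<longrightarrow> y $ j = z $ j) \<longrightarrow> \<gamma> y = \<gamma> z) \<and>
      \<Omega> \<inter> ball x0 r = {x \<in> ball x0 r. \<gamma> (T x) < (T x) $ k})"

definition smooth_bounded_domain :: "(real^'n::finite) set \<Rightarrow> bool" where
  "smooth_bounded_domain \<Omega> = (open \<Omega> \<and> connected \<Omega> \<and> \<Omega> \<noteq> {} \<and> bounded \<Omega> \<and> smooth_boundary \<Omega>)"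

definition holder_on :: "real \<Rightarrow> (real^'n::finite) set \<Rightarrow> (real^'n \<Rightarrow> real) \<Rightarrow> bool" where
  "holder_on \<alpha> S f = (continuous_on S f \<and>
     (\<exists>C. \<forall>x\<in>S. \<forall>y\<in>S. \<bar>f x - f y\<bar> \<le> C * dist x y powr \<alpha>))"

definition test_fun :: "(real^'n::finite) set \<Rightarrow> (real^'n \<Rightarrow> real) \<Rightarrow> bool" where
  "test_fun \<Omega> \<phi> = (Cinf \<phi> UNIV \<and> compact (closure {x. \<phi> x \<noteq> 0}) \<and> closure {x. \<phi> x \<noteq> 0} \<subseteq> \<Omega>)"

definition weak_grad :: "(real^'n::finite) set \<Rightarrow> (real^'n \<Rightarrow> real) \<Rightarrow> (real^'n \<Rightarrow> real^'n) \<Rightarrow> bool" where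
  "weak_grad \<Omega> u g = (\<forall>i.
      (\<lambda>x. g x $ i) \<in> borel_measurable (lebesgue_on \<Omega>) \<and>
      integrable (lebesgue_on \<Omega>) (\<lambda>x. (g x $ i)\<^sup>2) \<and>
      (\<forall>\<phi>. test_fun \<Omega> \<phi> \<longrightarrow>
         (LINT x|lebesgue_on \<Omega>. u x * pd i \<phi> x) = - (LINT x|lebesgue_on \<Omega>. g x $ i * \<phi> x)))"

definition H1 :: "(real^'n::finite) set \<Rightarrow> (real^'n \<Rightarrow> real) set" where
  "H1 \<Omega> = {u. u \<in> borel_measurable (lebesgue_on \<Omega>) \<and>
              integrable (lebesgue_on \<Omega>) (\<lambda>x. (u x)\<^sup>2) \<and> (\<exists>g. weak_grad \<Omega> u g)}"

definition grad :: "(real^'n::finite) set \<Rightarrow> (real^'n \<Rightarrow> real) \<Rightarrow> real^'n \<Rightarrow> real^'n" where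
  "grad \<Omega> u = (SOME g. weak_grad \<Omega> u g)"

definition EE :: "(real^'n::finite) set \<Rightarrow> (real^'n \<Rightarrow> real) \<Rightarrow> real" where
  "EE \<Omega> u = (LINT x|lebesgue_on \<Omega>. (norm (grad \<Omega> u x))\<^sup>2)"

definition AA :: "(real^'n::finite) set \<Rightarrow> (real^'n \<Rightarrow> real) \<Rightarrow> real \<Rightarrow> (real^'n \<Rightarrow> real) \<Rightarrow> real" where
  "AA \<Omega> a p u = (LINT x|lebesgue_on \<Omega>. a x * \<bar>u x\<bar> powr p)"

definition BB :: "(real^'n::finite) set \<Rightarrow> (real^'n \<Rightarrow> real) \<Rightarrow> real \<Rightarrow> (real^'n \<Rightarrow> real) \<Rightarrow> real" where
  "BB \<Omega> b q u = (LINT x|lebesgue_on \<Omega>. b x * \<bar>u x\<bar> powr q)"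

definition II :: "(real^'n::finite) set \<Rightarrow> (real^'n \<Rightarrow> real) \<Rightarrow> (real^'n \<Rightarrow> real) \<Rightarrow> real \<Rightarrow> real \<Rightarrow> real
                  \<Rightarrow> (real^'n \<Rightarrow> real) \<Rightarrow> real" where
  "II \<Omega> a b p q lam u = EE \<Omega> u / 2 - AA \<Omega> a p u / p - lam / q * BB \<Omega> b q u"

text \<open>u is nonzero as an element of H^1, i.e. not a.e. zero on Omega.\<close>
definition Nehari :: "(real^'n::finite) set \<Rightarrow> (real^'n \<Rightarrow> real) \<Rightarrow> (real^'n \<Rightarrow> real) \<Rightarrow> real \<Rightarrow> real \<Rightarrow> real
                  \<Rightarrow> (real^'n \<Rightarrow> real) set" where
  "Nehari \<Omega> a b p q lam = {u \<in> H1 \<Omega>. \<not> (AE x in lebesgue_on \<Omega>. u x = 0) \<and>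
        EE \<Omega> u = AA \<Omega> a p u + lam * BB \<Omega> b q u}"

definition Nehari_minus :: "(real^'n::finite) set \<Rightarrow> (real^'n \<Rightarrow> real) \<Rightarrow> (real^'n \<Rightarrow> real) \<Rightarrow> real \<Rightarrow> real \<Rightarrow> real
                  \<Rightarrow> (real^'n \<Rightarrow> real) set" where
  "Nehari_minus \<Omega> a b p q lam = {u \<in> Nehari \<Omega> a b p q lam.
        EE \<Omega> u > lam * (p - q) / (p - 2) * BB \<Omega> b q u}"

definition Cpq :: "real \<Rightarrow> real \<Rightarrow> real" where
  "Cpq p q = q * (p - 2) / (2 * (p - q)) * (p * (2 - q) / (2 * (p - q))) powr ((2 - q) / (p - 2))"

text \<open>lambda_0 as an extended real; Inf of the empty set is infinity.\<close>
definition lambda0 :: "(real^'n::finite) set \<Rightarrow> (real^'n \<Rightarrow> real) \<Rightarrow> (real^'n \<Rightarrow> real) \<Rightarrow> real \<Rightarrow> real \<Rightarrow> ereal" where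
  "lambda0 \<Omega> a b p q = Inf {ereal (EE \<Omega> u powr ((p - q) / (p - 2))) | u.
        u \<in> H1 \<Omega> \<and> EE \<Omega> u > 0 \<and> AA \<Omega> a p u > 0 \<and> BB \<Omega> b q u > 0 \<and>
        BB \<Omega> b q u * AA \<Omega> a p u powr ((2 - q) / (p - 2)) / Cpq p q = 1}"

end

theory Submission
  imports Defs "HOL-Computational_Algebra.Polynomial" "HOL-Real_Asymp.Real_Asymp"
begin

definition G :: "real poly \<Rightarrow> real poly \<Rightarrow> nat \<Rightarrow> real \<Rightarrow> real" where
 "G q P m s = (if poly q s > 0 then poly P s / poly q s ^ m * exp (- 1 / poly q s) else 0)"

definition Hf :: "nat \<Rightarrow> real \<Rightarrow> real" where
 "Hf m w = (if w > 0 then exp (- 1 / w) / w ^ (m+1) else 0)"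

lemma Hf_lim: "(Hf m \<longlongrightarrow> 0) (at 0)"
proof (rule filterlim_split_at)
  show "(Hf m \<longlongrightarrow> 0) (at_left 0)"
    by (rule tendsto_eventually) (auto simp: Hf_def eventually_at_left_field intro: exI[of _ "-1"])
  have "((\<lambda>w. exp (- 1 / w) / w ^ (m+1)) \<longlongrightarrow> 0) (at_right (0::real))"
    by real_asymp
  then show "(Hf m \<longlongrightarrow> 0) (at_right 0)"
    by (rule Lim_transform_eventually) (auto simp: Hf_def eventually_at_right_field intro: exI[of _ "1"])
qed

lemma Hf_nonneg: "Hf m w \<ge> 0" by (auto simp: Hf_def)


definition Gn where "Gn q P m = pderiv P * q^2 - smult (of_nat m) (P * pderiv q * q) + P * pderiv q"

lemma G_deriv_pos:
  assumes "poly q s > 0"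
  shows "(G q P m has_real_derivative G q (Gn q P m) (m+2) s) (at s)"
proof -
  let ?F = "\<lambda>y. poly P y / poly q y ^ m * exp (- 1 / poly q y)"
  have d: "(?F has_real_derivative G q (Gn q P m) (m+2) s) (at s)"
    using assms
    apply (simp add: G_def Gn_def)
    apply (rule derivative_eq_intros refl | simp)+
    apply (cases m)
     apply (simp add: field_simps power2_eq_square)
    apply (simp add: field_simps power2_eq_square)
    done
  show ?thesis
    apply (rule has_field_derivative_transform_within_open[OF d, of "{y. poly q y > 0}"])
    using assms by (auto simp: G_def intro!: open_Collect_less continuous_intros)
qed


lemma G_deriv_neg:
  assumes "poly q s < 0"
  shows "(G q P m has_real_derivative G q P' m' s) (at s)"
proof -
  have "((\<lambda>_. 0) has_real_derivative 0) (at s)" by simp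
  then have "(G q P m has_real_derivative 0) (at s)"
    apply (rule has_field_derivative_transform_within_open[of _ _ _ "{y. poly q y < 0}"])
    using assms by (auto simp: G_def intro!: open_Collect_less continuous_intros)
  then show ?thesis using assms by (simp add: G_def)
qed

lemma G_deriv_zero:
  assumes "poly q s = 0"
  shows "(G q P m has_real_derivative G q P' m' s) (at s)"
proof -
  have G0: "G q P m s = 0" "G q P' m' s = 0" using assms by (auto simp: G_def)
  have dq: "((\<lambda>y. (poly q y - poly q s) / (y - s)) \<longlongrightarrow> poly (pderiv q) s) (at s)"
    using poly_DERIV[of q s] by (simp add: has_field_derivative_iff)
  define K where "K = \<bar>poly (pderiv q) s\<bar> + 1"
  define M where "M = \<bar>poly P s\<bar> + 1"
  have evK: "eventually (\<lambda>y. \<bar>poly q y / (y - s)\<bar> \<le> K) (at s)"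
  proof -
    have "eventually (\<lambda>y. dist ((poly q y - poly q s) / (y - s)) (poly (pderiv q) s) < 1) (at s)"
      using dq by (rule tendstoD) simp
    then show ?thesis
    proof eventually_elim
      case (elim y)
      then have "\<bar>poly q y / (y - s) - poly (pderiv q) s\<bar> < 1" by (simp add: dist_real_def assms)
      then show ?case unfolding K_def by linarith
    qed
  qed
  have evM: "eventually (\<lambda>y. \<bar>poly P y\<bar> \<le> M) (at s)"
  proof -
    have "((\<lambda>y. poly P y) \<longlongrightarrow> poly P s) (at s)"
      by (metis isCont_def poly_isCont)
    then have "eventually (\<lambda>y. dist (poly P y) (poly P s) < 1) (at s)"
      by (rule tendstoD) simp
    then show ?thesis
      by eventually_elim (auto simp: M_def dist_real_def)
  qed
  have lim: "((\<lambda>y. M * K * Hf m (poly q y)) \<longlongrightarrow> 0) (at s)"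
  proof -
    have "((\<lambda>y. poly q y) \<longlongrightarrow> 0) (at s)"
      using assms by (metis isCont_def poly_isCont)
    moreover have "isCont (Hf m) 0"
      using Hf_lim by (simp add: isCont_def Hf_def)
    ultimately have "((\<lambda>y. Hf m (poly q y)) \<longlongrightarrow> Hf m 0) (at s)"
      using isCont_tendsto_compose by blast
    then have "((\<lambda>y. Hf m (poly q y)) \<longlongrightarrow> 0) (at s)" by (simp add: Hf_def)
    then show ?thesis by (auto intro: tendsto_eq_intros)
  qed
  have ne: "eventually (\<lambda>y. y \<noteq> s) (at s)" by (simp add: eventually_at_filter)
  have "((\<lambda>y. (G q P m y - G q P m s) / (y - s)) \<longlongrightarrow> 0) (at s)"
  proof (rule Lim_null_comparison[OF _ lim])
    show "eventually (\<lambda>y. norm ((G q P m y - G q P m s) / (y - s)) \<le> M * K * Hf m (poly q y)) (at s)"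
      using evK evM ne
    proof eventually_elim
      case (elim y)
      have K0: "K \<ge> 0" "M \<ge> 0" by (auto simp: K_def M_def)
      show ?case
      proof (cases "poly q y > 0")
        case False
        then show ?thesis using K0 Hf_nonneg[of m] assms by (simp add: G_def)
      next
        case True
        define w where "w = poly q y"
        have w: "w > 0" using True w_def by simp
        have ys: "\<bar>y - s\<bar> > 0" using elim by simp
        have "w / \<bar>y - s\<bar> \<le> K" using elim(1) w by (simp add: w_def abs_divide)
        then have inv: "1 / \<bar>y - s\<bar> \<le> K / w" using w ys by (simp add: field_simps)
        have "norm ((G q P m y - G q P m s) / (y - s)) = \<bar>poly P y\<bar> * (exp (- 1 / w) / w ^ m) * (1 / \<bar>y - s\<bar>)"
          using w G0 True by (simp add: G_def w_def abs_divide abs_mult)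
        also have "\<dots> \<le> M * (exp (- 1 / w) / w ^ m) * (K / w)"
          by (intro mult_mono inv elim(2)) (use w K0 in auto)
        also have "\<dots> = M * K * Hf m (poly q y)"
          using w by (simp add: Hf_def w_def[symmetric] field_simps)
        finally show ?thesis .
      qed
    qed
  qed
  then show ?thesis using G0 by (simp add: has_field_derivative_iff)
qed


lemma G_deriv: "(G q P m has_real_derivative G q (Gn q P m) (m+2) s) (at s)"
  using G_deriv_pos G_deriv_neg G_deriv_zero by (metis linorder_neqE_linordered_idom)

fun dfam :: "real poly \<Rightarrow> nat \<Rightarrow> real poly \<times> nat" where
  "dfam q 0 = (1, 0)"
| "dfam q (Suc n) = (Gn q (fst (dfam q n)) (snd (dfam q n)), snd (dfam q n) + 2)"

definition DD :: "real poly \<Rightarrow> nat \<Rightarrow> real \<Rightarrow> real" where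
  "DD q n = G q (fst (dfam q n)) (snd (dfam q n))"

lemma DD_deriv: "(DD q n has_real_derivative DD q (Suc n) s) (at s)"
  unfolding DD_def using G_deriv by simp

lemma DD0: "DD q 0 s = (if poly q s > 0 then exp (- 1 / poly q s) else 0)"
  by (simp add: DD_def G_def)

lemma Ck_prod:
  fixes D :: "'n::finite \<Rightarrow> nat \<Rightarrow> real \<Rightarrow> real"
  assumes D: "\<And>j n s. (D j n has_real_derivative D j (Suc n) s) (at s)"
  shows "Ck k (\<lambda>x::real^'n. \<Prod>j\<in>UNIV. D j (\<kappa> j) (x $ j)) UNIV"
proof (induction k arbitrary: \<kappa>)
  have cont: "continuous_on UNIV (\<lambda>x::real^'n. \<Prod>j\<in>UNIV. D j (\<kappa> j) (x $ j))" for \<kappa>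
  proof -
    have c1: "isCont (D j n) s" for j n s using D DERIV_isCont by blast
    have "isCont (\<lambda>x::real^'n. D j n (x $ j)) x" for j n x
      using continuous_at_compose[of x "\<lambda>x::real^'n. x $ j" "D j n"] c1
      by (auto simp: o_def intro: continuous_intros)
    then show ?thesis
      by (intro continuous_at_imp_continuous_on ballI continuous_intros) auto
  qed
  { case 0
  then show ?case using cont by simp }
  { case (Suc k)
  have der: "((\<lambda>t. \<Prod>j\<in>UNIV. D j (\<kappa> j) ((x + t *\<^sub>R axis i 1) $ j)) has_real_derivative
      (\<Prod>j\<in>UNIV. D j ((\<kappa>(i := Suc (\<kappa> i))) j) (x $ j))) (at 0)" for x i
  proof -
    have eq: "(\<lambda>t. \<Prod>j\<in>UNIV. D j (\<kappa> j) ((x + t *\<^sub>R axis i 1) $ j))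
       = (\<lambda>t. D i (\<kappa> i) (x $ i + t) * (\<Prod>j\<in>UNIV - {i}. D j (\<kappa> j) (x $ j)))"
      by (rule ext, subst prod.remove[of _ i]) (auto simp: axis_def intro!: prod.cong)
    have eq2: "(\<Prod>j\<in>UNIV. D j ((\<kappa>(i := Suc (\<kappa> i))) j) (x $ j))
       = D i (Suc (\<kappa> i)) (x $ i) * (\<Prod>j\<in>UNIV - {i}. D j (\<kappa> j) (x $ j))"
      by (subst prod.remove[of _ i]) (auto intro!: prod.cong)
    have "((\<lambda>t. D i (\<kappa> i) (x $ i + t)) has_real_derivative D i (Suc (\<kappa> i)) (x $ i)) (at 0)"
    proof -
      have "((\<lambda>t. x $ i + t) has_real_derivative 1) (at 0)"
        by (auto intro!: derivative_eq_intros)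
      from DERIV_chain2[of "D i (\<kappa> i)" _ "\<lambda>t. x $ i + t" 0, OF _ this]
      show ?thesis using D[of i "\<kappa> i" "x $ i"] by simp
    qed
    then show ?thesis unfolding eq eq2 by (auto intro!: derivative_eq_intros)
  qed
  have pdeq: "pd i (\<lambda>x::real^'n. \<Prod>j\<in>UNIV. D j (\<kappa> j) (x $ j)) = (\<lambda>x. \<Prod>j\<in>UNIV. D j ((\<kappa>(i := Suc (\<kappa> i))) j) (x $ j))" for i
  proof
    fix x
    show "pd i (\<lambda>x::real^'n. \<Prod>j\<in>UNIV. D j (\<kappa> j) (x $ j)) x = (\<Prod>j\<in>UNIV. D j ((\<kappa>(i := Suc (\<kappa> i))) j) (x $ j))"
      unfolding pd_def by (rule the_equality) (use der[of x i] DERIV_unique in auto)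
  qed
  show ?case using cont der Suc.IH by (simp add: pdeq) }
qed


definition qq :: "nat \<Rightarrow> real \<Rightarrow> real \<Rightarrow> real poly" where
  "qq n c d = [: - real (Suc n) * c * d, real (Suc n) * (c + d), - real (Suc n) :]"

lemma poly_qq: "poly (qq n c d) s = real (Suc n) * ((s - c) * (d - s))"
  by (simp add: qq_def algebra_simps)

definition tf :: "nat \<Rightarrow> real^'n::finite \<Rightarrow> real^'n \<Rightarrow> real^'n \<Rightarrow> real" where
  "tf n c d x = (\<Prod>j\<in>UNIV. DD (qq n (c $ j) (d $ j)) 0 (x $ j))"

lemma tf_Cinf: "Cinf (tf n c d) UNIV"
  unfolding Cinf_def tf_def
proof
  fix k
  show "Ck k (\<lambda>x. \<Prod>j\<in>UNIV. DD (qq n (c $ j) (d $ j)) 0 (x $ j)) UNIV"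
    using Ck_prod[of "\<lambda>j. DD (qq n (c $ j) (d $ j))" k "\<lambda>_. 0"] DD_deriv by blast
qed

lemma pos_iff: "(0 < real (Suc n) * ((s - c) * (d - s))) \<longleftrightarrow> (c < s \<and> s < d) \<or> (d < s \<and> s < c)"
  by (smt (verit, best) mult_pos_pos mult_neg_neg of_nat_0_less_iff zero_less_Suc zero_less_mult_iff)

lemma qq_pos: "c < d \<Longrightarrow> 0 < poly (qq n c d) s \<longleftrightarrow> c < s \<and> s < d"
  unfolding poly_qq pos_iff by auto

lemma tf_nz:
  assumes "\<forall>j. c $ j < d $ j"
  shows "{x. tf n c d x \<noteq> 0} = box c d"
  using assms by (auto simp: tf_def DD0 qq_pos mem_box_cart split: if_splits)

lemma tf_bound: "\<bar>tf n c d x\<bar> \<le> 1" "tf n c d x \<ge> 0"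
proof -
  have "0 \<le> DD (qq n (c $ j) (d $ j)) 0 (x $ j) \<and> DD (qq n (c $ j) (d $ j)) 0 (x $ j) \<le> 1" for j
    by (auto simp: DD0)
  then have "0 \<le> tf n c d x" "tf n c d x \<le> 1" unfolding tf_def
    by (auto intro!: prod_le_1 prod_nonneg)
  then show "\<bar>tf n c d x\<bar> \<le> 1" "tf n c d x \<ge> 0" by auto
qed

lemma tf_lim:
  assumes "\<forall>j. c $ j < d $ j"
  shows "(\<lambda>n. tf n c d x) \<longlonglongrightarrow> indicator (box c d) x"
proof (cases "x \<in> box c d")
  case True
  then have in1: "c $ j < x $ j \<and> x $ j < d $ j" for j by (auto simp: mem_box_cart)
  have "(\<lambda>n. DD (qq n (c $ j) (d $ j)) 0 (x $ j)) \<longlonglongrightarrow> 1" for j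
  proof -
    define p where "p = (x $ j - c $ j) * (d $ j - x $ j)"
    have p: "p > 0" using in1[of j] by (simp add: p_def)
    have eq: "DD (qq n (c $ j) (d $ j)) 0 (x $ j) = exp (- (1 / p) * inverse (real (Suc n)))" for n
    proof -
      have "-1 / (real (Suc n) * p) = - (1 / p) * inverse (real (Suc n))"
        by (simp add: field_simps)
      then show ?thesis using p by (simp add: DD0 poly_qq p_def[symmetric] del: of_nat_Suc)
    qed
    have "(\<lambda>n. exp (- (1 / p) * inverse (real (Suc n)))) \<longlonglongrightarrow> exp (- (1/p) * 0)"
      by (intro tendsto_intros LIMSEQ_inverse_real_of_nat)
    then show ?thesis unfolding eq by simp
  qed
  then have "(\<lambda>n. tf n c d x) \<longlonglongrightarrow> (\<Prod>j\<in>(UNIV::'a set). 1)"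
    unfolding tf_def by (intro tendsto_prod) auto
  then show ?thesis using True by simp
next
  case False
  then obtain j where "\<not> (c $ j < x $ j \<and> x $ j < d $ j)" by (auto simp: mem_box_cart)
  then have "DD (qq n (c $ j) (d $ j)) 0 (x $ j) = 0" for n
    using assms by (auto simp: DD0 qq_pos)
  then have "tf n c d x = 0" for n unfolding tf_def by (intro prod_zero) auto
  then show ?thesis using False by simp
qed

lemma tf_test:
  assumes "\<forall>j. c $ j < d $ j" "cbox c d \<subseteq> \<Omega>"
  shows "test_fun \<Omega> (tf n c d)"
proof -
  have "(1/2) *\<^sub>R (c + d) \<in> box c d" using assms(1) by (auto simp: mem_box_cart)
  then have ne: "box c d \<noteq> {}" by auto
  show ?thesis unfolding test_fun_def using tf_Cinf tf_nz[OF assms(1)] closure_box[OF ne] assms(2)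
    by auto
qed


lemma tf_meas: "tf n c d \<in> borel_measurable lebesgue"
proof -
  have "continuous_on UNIV (tf n c d)" using tf_Cinf[of n c d] unfolding Cinf_def
    by (metis Ck.simps(1))
  then have "tf n c d \<in> borel_measurable borel" by (rule borel_measurable_continuous_onI)
  then show ?thesis by (simp add: measurable_completion)
qed

lemma one_nth: "(One :: real^'n::finite) $ i = 1"
  by (metis one_index Cart_1)

lemma FL:
  fixes \<Omega> :: "(real^'n::finite) set" and h :: "real^'n \<Rightarrow> real"
  assumes op: "open \<Omega>" and \<Omega>m: "\<Omega> \<in> sets lebesgue" and hi: "integrable (lebesgue_on \<Omega>) h"
    and z: "\<And>\<phi>. test_fun \<Omega> \<phi> \<Longrightarrow> (\<forall>x. \<bar>\<phi> x\<bar> \<le> 1) \<Longrightarrow> (LINT x|lebesgue_on \<Omega>. h x * \<phi> x) = 0"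
  shows "AE x in lebesgue_on \<Omega>. h x = 0"
proof -
  define f where "f x = indicator \<Omega> x * h x" for x
  have fi: "integrable lebesgue f" using hi integrable_restrict_space[of \<Omega> lebesgue h] \<Omega>m unfolding f_def[abs_def] by simp
  have fm: "f \<in> borel_measurable lebesgue" using fi by (rule borel_measurable_integrable)
  have conv: "integral\<^sup>L (lebesgue_on \<Omega>) g = (LINT x|lebesgue. indicator \<Omega> x * g x)" for g :: "real^'n \<Rightarrow> real"
    using integral_restrict_space[of \<Omega> lebesgue g] \<Omega>m by simp
  have boxm: "indicator (box c d) \<in> borel_measurable lebesgue" for c d :: "real^'n"
    by (intro borel_measurable_indicator) (simp add: measurable_completion)
  have box0: "(LINT x|lebesgue. f x * indicator (box c d) x) = 0" if cd: "\<forall>j. c$j < d$j" "cbox c d \<subseteq> \<Omega>" for c d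
  proof -
    have "(\<lambda>n. LINT x|lebesgue. f x * tf n c d x) \<longlonglongrightarrow> (LINT x|lebesgue. f x * indicator (box c d) x)"
    proof (rule integral_dominated_convergence[where w="\<lambda>x. \<bar>f x\<bar>"])
      show "(\<lambda>x. f x * indicat_real (box c d) x) \<in> borel_measurable lebesgue"
        using fm boxm by (intro borel_measurable_times) auto
      show "(\<lambda>x. f x * tf n c d x) \<in> borel_measurable lebesgue" for n
        using fm tf_meas by (intro borel_measurable_times) auto
      show "integrable lebesgue (\<lambda>x. \<bar>f x\<bar>)" using fi by simp
      show "AE x in lebesgue. (\<lambda>n. f x * tf n c d x) \<longlonglongrightarrow> f x * indicat_real (box c d) x"
        using tf_lim[OF cd(1)] by (auto intro!: tendsto_mult)
      show "AE x in lebesgue. norm (f x * tf n c d x) \<le> \<bar>f x\<bar>" for n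
        using tf_bound[of n c d] by (auto simp: abs_mult intro!: mult_left_le)
    qed
    moreover have "(LINT x|lebesgue. f x * tf n c d x) = 0" for n
    proof -
      have "(LINT x|lebesgue. f x * tf n c d x) = (LINT x|lebesgue_on \<Omega>. h x * tf n c d x)"
        unfolding conv by (simp add: f_def mult.assoc)
      also have "\<dots> = 0" using z[OF tf_test[OF cd]] tf_bound by blast
      finally show ?thesis .
    qed
    ultimately have "(\<lambda>n. 0::real) \<longlonglongrightarrow> (LINT x|lebesgue. f x * indicator (box c d) x)" by simp
    from LIMSEQ_unique[OF this tendsto_const] show ?thesis .
  qed
  have fint: "f integrable_on S" if "S \<in> sets lebesgue" for S
  proof -
    have "f absolutely_integrable_on S"
      unfolding absolutely_integrable_on_def set_integrable_def
      using integrable_mult_indicator[OF that fi] by simp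
    then show ?thesis by (rule set_lebesgue_integral_eq_integral(1))
  qed
  have cube0: "integral (cbox c d) f = 0" if cd: "\<forall>j. c$j < d$j" "cbox c d \<subseteq> \<Omega>" for c d
  proof -
    have fab: "f absolutely_integrable_on (cbox c d)"
      unfolding absolutely_integrable_on_def set_integrable_def
      using integrable_mult_indicator[OF _ fi] by simp
    then have "integral (cbox c d) f = (LINT x|lebesgue. indicator (cbox c d) x *\<^sub>R f x)"
      using set_lebesgue_integral_eq_integral(2)[OF fab] unfolding set_lebesgue_integral_def by simp
    also have "\<dots> = (LINT x|lebesgue. f x * indicator (box c d) x)"
    proof (rule integral_cong_AE)
      show "(\<lambda>x. indicat_real (cbox c d) x *\<^sub>R f x) \<in> borel_measurable lebesgue"
        using fm by (intro borel_measurable_scaleR borel_measurable_indicator) auto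
      show "(\<lambda>x. f x * indicat_real (box c d) x) \<in> borel_measurable lebesgue"
        using fm boxm by (intro borel_measurable_times) auto
      have "cbox c d - box c d \<in> null_sets lebesgue"
        using negligible_frontier_interval negligible_iff_null_sets by blast
      then have "AE x in lebesgue. x \<notin> cbox c d - box c d" by (rule AE_not_in)
      then show "AE x in lebesgue. indicat_real (cbox c d) x *\<^sub>R f x = f x * indicat_real (box c d) x"
        by eventually_elim (use box_subset_cbox in \<open>auto simp: indicator_def\<close>)
    qed
    also have "\<dots> = 0" using box0[OF cd] .
    finally show ?thesis .
  qed
  have fc: "f integrable_on cbox a b" for a b by (rule fint) simp
  obtain N where negN: "negligible N" and k: "\<And>x e. \<lbrakk>x \<notin> N; 0 < e\<rbrakk> \<Longrightarrow>
               \<exists>d>0. \<forall>h. 0 < h \<and> h < d \<longrightarrow>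
                         norm(integral (cbox x (x + h *\<^sub>R One)) f /\<^sub>R h ^ DIM(real^'n) - f x) < e"
    using integrable_ccontinuous_explicit[of f] fc by metis
  have fx0: "f x = 0" if x: "x \<in> \<Omega>" "x \<notin> N" for x
  proof (rule ccontr)
    assume nz: "f x \<noteq> 0"
    then obtain d where d: "d > 0" and dd: "\<And>h. 0 < h \<and> h < d \<Longrightarrow>
        norm(integral (cbox x (x + h *\<^sub>R One)) f /\<^sub>R h ^ DIM(real^'n) - f x) < \<bar>f x\<bar>"
      using k[OF x(2), of "\<bar>f x\<bar>"] by auto
    obtain r where r: "r > 0" "ball x r \<subseteq> \<Omega>" using op x(1) openE by blast
    define \<delta> where "\<delta> = min (d/2) (r / (2 * real CARD('n)))"
    have \<delta>: "\<delta> > 0" "\<delta> < d" using d r by (auto simp: \<delta>_def)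
    have e: "(x + \<delta> *\<^sub>R One) $ j = x $ j + \<delta>" for j
      by (simp only: vector_add_component vector_scaleR_component one_nth, simp)
    have sub: "cbox x (x + \<delta> *\<^sub>R One) \<subseteq> \<Omega>"
    proof
      fix y assume y: "y \<in> cbox x (x + \<delta> *\<^sub>R One)"
      then have yj: "0 \<le> y $ j - x $ j \<and> y $ j - x $ j \<le> \<delta>" for j
        unfolding mem_box_cart e by (simp add: algebra_simps)
      have "norm (y - x) \<le> (\<Sum>j\<in>UNIV. \<bar>(y - x) $ j\<bar>)" by (rule norm_le_l1_cart)
      also have "\<dots> \<le> (\<Sum>j\<in>(UNIV::'n set). \<delta>)" using yj by (intro sum_mono) auto
      also have "\<dots> = real CARD('n) * \<delta>" by simp
      also have "\<dots> \<le> real CARD('n) * (r / (2 * real CARD('n)))"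
        by (intro mult_left_mono) (auto simp: \<delta>_def)
      also have "\<dots> < r" using r by simp
      finally have "y \<in> ball x r" by (simp add: dist_norm norm_minus_commute)
      then show "y \<in> \<Omega>" using r by blast
    qed
    have "integral (cbox x (x + \<delta> *\<^sub>R One)) f = 0"
      by (rule cube0) (use sub \<delta> e in auto)
    then show False using dd[of \<delta>] \<delta> by simp
  qed
  have "N \<in> null_sets lebesgue" using negN negligible_iff_null_sets by blast
  then have "AE x in lebesgue. x \<notin> N" by (rule AE_not_in)
  then have "AE x in lebesgue. x \<in> \<Omega> \<longrightarrow> h x = 0"
    by eventually_elim (use fx0 in \<open>auto simp: f_def\<close>)
  then show ?thesis using AE_restrict_space_iff[of \<Omega> lebesgue] \<Omega>m by simp
qed


lemma norm_sq: "(norm (v::real^'n::finite))^2 = (\<Sum>i\<in>UNIV. (v$i)^2)"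
  by (simp add: norm_vec_def L2_set_def sum_nonneg)

lemma weak_grad_scale:
  assumes "weak_grad \<Omega> u g"
  shows "weak_grad \<Omega> (\<lambda>x. t * u x) (\<lambda>x. t *\<^sub>R g x)"
  unfolding weak_grad_def
proof (intro allI conjI impI)
  fix i
  have g: "(\<lambda>x. g x $ i) \<in> borel_measurable (lebesgue_on \<Omega>)"
    "integrable (lebesgue_on \<Omega>) (\<lambda>x. (g x $ i)\<^sup>2)"
    "\<And>\<phi>. test_fun \<Omega> \<phi> \<Longrightarrow> (LINT x|lebesgue_on \<Omega>. u x * pd i \<phi> x) = - (LINT x|lebesgue_on \<Omega>. g x $ i * \<phi> x)"
    using assms unfolding weak_grad_def by auto
  show "(\<lambda>x. (t *\<^sub>R g x) $ i) \<in> borel_measurable (lebesgue_on \<Omega>)"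
    using g(1) by simp
  show "integrable (lebesgue_on \<Omega>) (\<lambda>x. ((t *\<^sub>R g x) $ i)\<^sup>2)"
    using integrable_mult_right[OF g(2), of "t^2"] by (simp add: power_mult_distrib)
  fix \<phi> assume "test_fun \<Omega> \<phi>"
  then show "(LINT x|lebesgue_on \<Omega>. t * u x * pd i \<phi> x) = - (LINT x|lebesgue_on \<Omega>. (t *\<^sub>R g x) $ i * \<phi> x)"
    using g(3) by (simp add: mult.assoc)
qed

lemma grad_scale_AE:
  fixes \<Omega> :: "(real^'n::finite) set"
  assumes op: "open \<Omega>" and lm: "\<Omega> \<in> lmeasurable"
    and g1: "weak_grad \<Omega> u g1" and g2: "weak_grad \<Omega> (\<lambda>x. t * u x) g2"
  shows "AE x in lebesgue_on \<Omega>. g2 x = t *\<^sub>R g1 x"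
proof -
  have fm: "finite_measure (lebesgue_on \<Omega>)" using lm by (rule finite_measure_lebesgue_on)
  have sl: "\<Omega> \<in> sets lebesgue" using lm by auto
  have comp: "AE x in lebesgue_on \<Omega>. g2 x $ i = t * g1 x $ i" for i
  proof -
    have m1: "(\<lambda>x. g1 x $ i) \<in> borel_measurable (lebesgue_on \<Omega>)"
      and i1: "integrable (lebesgue_on \<Omega>) (\<lambda>x. (g1 x $ i)\<^sup>2)"
      and w1: "\<And>\<phi>. test_fun \<Omega> \<phi> \<Longrightarrow> (LINT x|lebesgue_on \<Omega>. u x * pd i \<phi> x) = - (LINT x|lebesgue_on \<Omega>. g1 x $ i * \<phi> x)"
      using g1 unfolding weak_grad_def by auto
    have m2: "(\<lambda>x. g2 x $ i) \<in> borel_measurable (lebesgue_on \<Omega>)"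
      and i2: "integrable (lebesgue_on \<Omega>) (\<lambda>x. (g2 x $ i)\<^sup>2)"
      and w2: "\<And>\<phi>. test_fun \<Omega> \<phi> \<Longrightarrow> (LINT x|lebesgue_on \<Omega>. t * u x * pd i \<phi> x) = - (LINT x|lebesgue_on \<Omega>. g2 x $ i * \<phi> x)"
      using g2 unfolding weak_grad_def by auto
    have I1: "integrable (lebesgue_on \<Omega>) (\<lambda>x. g1 x $ i)"
      using finite_measure.square_integrable_imp_integrable[OF fm m1 i1] .
    have I2: "integrable (lebesgue_on \<Omega>) (\<lambda>x. g2 x $ i)"
      using finite_measure.square_integrable_imp_integrable[OF fm m2 i2] .
    show ?thesis
    proof -
      have "AE x in lebesgue_on \<Omega>. g2 x $ i - t * g1 x $ i = 0"
      proof (rule FL[OF op sl])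
        show "integrable (lebesgue_on \<Omega>) (\<lambda>x. g2 x $ i - t * g1 x $ i)"
          using I1 I2 by auto
        fix \<phi> assume tf: "test_fun \<Omega> \<phi>" and b: "\<forall>x. \<bar>\<phi> x\<bar> \<le> 1"
        have "continuous_on UNIV \<phi>" using tf unfolding test_fun_def Cinf_def by (metis Ck.simps(1))
        then have "continuous_on \<Omega> \<phi>" by (rule continuous_on_subset) simp
        then have \<phi>m: "\<phi> \<in> borel_measurable (lebesgue_on \<Omega>)"
          using continuous_imp_measurable_on_sets_lebesgue sl by blast
        have J1: "integrable (lebesgue_on \<Omega>) (\<lambda>x. g1 x $ i * \<phi> x)"
          by (rule Bochner_Integration.integrable_bound[OF I1]) (use m1 \<phi>m b in \<open>auto simp: abs_mult intro!: mult_left_le\<close>)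
        have J2: "integrable (lebesgue_on \<Omega>) (\<lambda>x. g2 x $ i * \<phi> x)"
          by (rule Bochner_Integration.integrable_bound[OF I2]) (use m2 \<phi>m b in \<open>auto simp: abs_mult intro!: mult_left_le\<close>)
        have "(LINT x|lebesgue_on \<Omega>. g2 x $ i * \<phi> x) = t * (LINT x|lebesgue_on \<Omega>. g1 x $ i * \<phi> x)"
        proof -
          have "(LINT x|lebesgue_on \<Omega>. t * u x * pd i \<phi> x) = t * (LINT x|lebesgue_on \<Omega>. u x * pd i \<phi> x)"
            by (simp add: mult.assoc)
          then show ?thesis using w1[OF tf] w2[OF tf] by simp
        qed
        moreover have "(LINT x|lebesgue_on \<Omega>. (g2 x $ i - t * g1 x $ i) * \<phi> x)
           = (LINT x|lebesgue_on \<Omega>. g2 x $ i * \<phi> x) - t * (LINT x|lebesgue_on \<Omega>. g1 x $ i * \<phi> x)"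
          using J1 J2 by (simp add: left_diff_distrib mult.assoc)
        ultimately show "(LINT x|lebesgue_on \<Omega>. (g2 x $ i - t * g1 x $ i) * \<phi> x) = 0" by simp
      qed
      then show ?thesis by simp
    qed
  qed
  have "AE x in lebesgue_on \<Omega>. \<forall>i\<in>UNIV. g2 x $ i = t * g1 x $ i"
    by (rule eventually_ball_finite) (use comp in auto)
  then show ?thesis by eventually_elim (simp add: vec_eq_iff)
qed


lemma grad_in: "u \<in> H1 \<Omega> \<Longrightarrow> weak_grad \<Omega> u (grad \<Omega> u)"
  unfolding H1_def grad_def by (metis (mono_tags, lifting) mem_Collect_eq someI)

lemma H1_scale: "u \<in> H1 \<Omega> \<Longrightarrow> (\<lambda>x. t * u x) \<in> H1 \<Omega>"
proof -
  assume u: "u \<in> H1 \<Omega>"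
  then have "u \<in> borel_measurable (lebesgue_on \<Omega>)" "integrable (lebesgue_on \<Omega>) (\<lambda>x. (u x)\<^sup>2)"
    by (auto simp: H1_def)
  moreover have "weak_grad \<Omega> (\<lambda>x. t * u x) (\<lambda>x. t *\<^sub>R grad \<Omega> u x)"
    by (rule weak_grad_scale[OF grad_in[OF u]])
  moreover have "integrable (lebesgue_on \<Omega>) (\<lambda>x. t^2 * (u x)\<^sup>2)"
    using calculation(2) by (rule integrable_mult_right)
  ultimately show ?thesis unfolding H1_def by (auto simp: power_mult_distrib)
qed

lemma normsq_meas:
  assumes "weak_grad \<Omega> w g"
  shows "(\<lambda>x. (norm (g x))\<^sup>2) \<in> borel_measurable (lebesgue_on \<Omega>)"
proof -
  have "(\<lambda>x. g x $ i) \<in> borel_measurable (lebesgue_on \<Omega>)" for i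
    using assms unfolding weak_grad_def by auto
  then have "(\<lambda>x. \<Sum>i\<in>UNIV. (g x $ i)\<^sup>2) \<in> borel_measurable (lebesgue_on \<Omega>)"
    by (intro borel_measurable_sum borel_measurable_power) auto
  then show ?thesis by (simp add: norm_sq)
qed

lemma EE_scale:
  fixes \<Omega> :: "(real^'n::finite) set"
  assumes op: "open \<Omega>" and lm: "\<Omega> \<in> lmeasurable" and u: "u \<in> H1 \<Omega>"
  shows "EE \<Omega> (\<lambda>x. t * u x) = t\<^sup>2 * EE \<Omega> u"
proof -
  have g1: "weak_grad \<Omega> u (grad \<Omega> u)" by (rule grad_in[OF u])
  have g2: "weak_grad \<Omega> (\<lambda>x. t * u x) (grad \<Omega> (\<lambda>x. t * u x))" by (rule grad_in[OF H1_scale[OF u]])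
  have ae: "AE x in lebesgue_on \<Omega>. grad \<Omega> (\<lambda>x. t * u x) x = t *\<^sub>R grad \<Omega> u x"
    by (rule grad_scale_AE[OF op lm g1 g2])
  have "EE \<Omega> (\<lambda>x. t * u x) = (LINT x|lebesgue_on \<Omega>. t\<^sup>2 * (norm (grad \<Omega> u x))\<^sup>2)"
    unfolding EE_def
  proof (rule integral_cong_AE)
    show "(\<lambda>x. (norm (grad \<Omega> (\<lambda>x. t * u x) x))\<^sup>2) \<in> borel_measurable (lebesgue_on \<Omega>)"
      by (rule normsq_meas[OF g2])
    show "(\<lambda>x. t\<^sup>2 * (norm (grad \<Omega> u x))\<^sup>2) \<in> borel_measurable (lebesgue_on \<Omega>)"
      using normsq_meas[OF g1] by simp
    show "AE x in lebesgue_on \<Omega>. (norm (grad \<Omega> (\<lambda>x. t * u x) x))\<^sup>2 = t\<^sup>2 * (norm (grad \<Omega> u x))\<^sup>2"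
      using ae by eventually_elim (simp add: power_mult_distrib)
  qed
  also have "\<dots> = t\<^sup>2 * EE \<Omega> u" by (simp add: EE_def)
  finally show ?thesis .
qed

lemma AA_scale:
  assumes "t > 0"
  shows "AA \<Omega> a p (\<lambda>x. t * u x) = t powr p * AA \<Omega> a p u"
proof -
  have "(\<lambda>x. a x * \<bar>t * u x\<bar> powr p) = (\<lambda>x. t powr p * (a x * \<bar>u x\<bar> powr p))"
    using assms by (simp add: abs_mult powr_mult mult.left_commute)
  then show ?thesis unfolding AA_def by simp
qed

lemma BB_scale:
  assumes "t > 0"
  shows "BB \<Omega> b q (\<lambda>x. t * u x) = t powr q * BB \<Omega> b q u"
proof -
  have "(\<lambda>x. b x * \<bar>t * u x\<bar> powr q) = (\<lambda>x. t powr q * (b x * \<bar>u x\<bar> powr q))"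
    using assms by (simp add: abs_mult powr_mult mult.left_commute)
  then show ?thesis unfolding BB_def by simp
qed


lemma g_mono:
  fixes r k y :: real
  assumes r: "r > 0" and k: "0 < k" "k \<le> y" and y: "y \<le> 1 / (1 + r)"
  shows "k * (1 - k) powr r \<le> y * (1 - y) powr r"
proof (rule DERIV_nonneg_imp_nondecreasing[OF k(2)])
  fix x assume x0: "k \<le> x" "x \<le> y"
  then have x: "k \<le> x \<and> x \<le> y" by simp
  have x1: "x < 1" using x y r by (smt (verit) divide_less_eq_1_pos)
  have x0: "x > 0" using x k by simp
  have d: "((\<lambda>x. x * (1 - x) powr r) has_real_derivative
      (1 - x) powr r + x * (r * (1 - x) powr (r - 1) * (- 1))) (at x)"
    using x1 by (auto intro!: derivative_eq_intros)
  have eq: "(1 - x) powr r = (1 - x) powr (r - 1) * (1 - x)"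
  proof -
    have "(1 - x) powr r = (1 - x) powr ((r - 1) + 1)" by simp
    also have "\<dots> = (1 - x) powr (r - 1) * (1 - x) powr 1" by (rule powr_add)
    finally show ?thesis using x1 by simp
  qed
  have "x * (1 + r) \<le> y * (1 + r)" using x r by (intro mult_right_mono) auto
  also have "y * (1 + r) \<le> 1" using y r by (simp add: field_simps)
  finally have "x * (1 + r) \<le> 1" .
  then have "0 \<le> (1 - x) powr (r - 1) * ((1 - x) - x * r)"
    by (intro mult_nonneg_nonneg) (auto simp: algebra_simps)
  also have "\<dots> = (1 - x) powr r + x * (r * (1 - x) powr (r - 1) * (- 1))"
    by (simp add: eq algebra_simps)
  finally show "\<exists>d. ((\<lambda>x. x * (1 - x) powr r) has_real_derivative d) (at x) \<and> 0 \<le> d"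
    using d by blast
qed

lemma key_ineq:
  fixes p q e s A :: real
  assumes pq: "1 < q" "q < 2" "2 < p" and e: "e > 0" and s: "s > 0" and A: "A = e - s"
    and nm: "e > s * (p - q) / (p - 2)"
    and le: "e / 2 - A / p - s / q \<le> 0"
  shows "Cpq p q * e powr (1 + (2 - q) / (p - 2)) \<le> s * A powr ((2 - q) / (p - 2))"
proof -
  define r where "r = (2 - q) / (p - 2)"
  define k where "k = q * (p - 2) / (2 * (p - q))"
  define y where "y = s / e"
  have r0: "r > 0" using pq by (simp add: r_def)
  have k0: "k > 0" using pq by (simp add: k_def)
  have ky: "k \<le> y"
  proof -
    have "2 * p * q * (e / 2 - A / p - s / q) \<le> 0"
      using le pq by (simp add: mult_nonneg_nonpos)
    moreover have "2 * p * q * (e / 2 - A / p - s / q) = q * (p - 2) * e - 2 * (p - q) * s"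
      using pq unfolding A by (simp add: field_simps)
    ultimately have h1: "q * (p - 2) * e \<le> 2 * (p - q) * s" by linarith
    have "2 * (p - q) > 0" using pq by simp
    then show ?thesis using h1 e unfolding k_def y_def by (simp add: divide_simps mult.commute mult.left_commute)
  qed
  have y1: "y \<le> 1 / (1 + r)"
  proof -
    have "1 + r = (p - q) / (p - 2)" using pq by (simp add: r_def field_simps)
    then have a: "1 / (1 + r) = (p - 2) / (p - q)" by simp
    have "s * (p - q) < e * (p - 2)" using nm pq by (simp add: field_simps)
    then have "s / e \<le> (p - 2) / (p - q)" using e pq by (simp add: divide_simps mult.commute)
    then show ?thesis unfolding a y_def .
  qed
  have 1: "k * (1 - k) powr r \<le> y * (1 - y) powr r" by (rule g_mono[OF r0 k0 ky y1])
  have Cpq: "Cpq p q = k * (1 - k) powr r"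
  proof -
    have "1 - k = p * (2 - q) / (2 * (p - q))" using pq by (simp add: k_def field_simps)
    then show ?thesis by (simp add: Cpq_def k_def r_def)
  qed
  have y1': "1 - y > 0" using y1 r0 by (smt (verit) divide_less_eq_1_pos k0 ky)
  have "Cpq p q * e powr (1 + r) \<le> y * (1 - y) powr r * e powr (1 + r)"
    using 1 Cpq e by (simp add: mult_right_mono)
  also have "\<dots> = s * A powr r"
  proof -
    have "A = e * (1 - y)" using e unfolding A y_def by (simp add: field_simps)
    then have "A powr r = e powr r * (1 - y) powr r" using e y1' by (simp add: powr_mult)
    moreover have "e powr (1 + r) = e * e powr r" using e by (simp add: powr_add)
    ultimately show ?thesis using e unfolding y_def by (simp add: field_simps)
  qed
  finally show ?thesis unfolding r_def .
qed


theorem lemma2p7: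
  fixes \<Omega> :: "(real^'n::finite) set"
    and a b :: "real^'n \<Rightarrow> real"
    and p q \<alpha> lam :: real
  assumes "CARD('n) \<ge> 2"
    and "smooth_bounded_domain \<Omega>"
    and "1 < q" and "q < 2" and "2 < p"
    and "CARD('n) \<ge> 3 \<longrightarrow> p < 2 * real CARD('n) / (real CARD('n) - 2)"
    and "0 < \<alpha>" and "\<alpha> < 1"
    and "holder_on \<alpha> (closure \<Omega>) a" and "holder_on \<alpha> (closure \<Omega>) b"
    and "(LINT x|lebesgue_on \<Omega>. a x) < 0 \<or> (LINT x|lebesgue_on \<Omega>. b x) < 0"
    and "0 < lam" and "ereal lam < lambda0 \<Omega> a b p q"
  shows "\<forall>u \<in> Nehari_minus \<Omega> a b p q lam. II \<Omega> a b p q lam u > 0"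
proof
  have pq: "1 < q" "q < 2" "2 < p" using assms by auto
  have lam: "lam > 0" using assms by simp
  have op: "open \<Omega>" and bd: "bounded \<Omega>" using assms(2) by (auto simp: smooth_bounded_domain_def)
  have lm: "\<Omega> \<in> lmeasurable" using lmeasurable_interior[OF bd] interior_open[OF op] by simp
  fix u assume uN: "u \<in> Nehari_minus \<Omega> a b p q lam"
  define E where "E = EE \<Omega> u"
  define A where "A = AA \<Omega> a p u"
  define B where "B = BB \<Omega> b q u"
  have uH: "u \<in> H1 \<Omega>" and NE: "E = A + lam * B" and NM: "E > lam * (p - q) / (p - 2) * B"
    using uN by (auto simp: Nehari_minus_def Nehari_def E_def A_def B_def)
  have E0: "E \<ge> 0" unfolding E_def EE_def by (rule integral_nonneg_AE) auto
  have II: "II \<Omega> a b p q lam u = E / 2 - A / p - lam / q * B"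
    by (simp add: II_def E_def A_def B_def)
  show "II \<Omega> a b p q lam u > 0"
  proof (cases "B > 0")
    case False
    have eq: "2 * p * q * II \<Omega> a b p q lam u = q * (p - 2) * E - 2 * (p - q) * (lam * B)"
      using pq unfolding II NE by (simp add: field_simps)
    have pos: "q * (p - 2) * E - 2 * (p - q) * (lam * B) > 0"
    proof (cases "B = 0")
      case True
      then have "E > 0" using NM by simp
      then show ?thesis using True pq by simp
    next
      case B: False
      then have "lam * B < 0" using False lam by (simp add: mult_pos_neg)
      then have "2 * (p - q) * (lam * B) < 0" using pq by (simp add: mult_pos_neg)
      moreover have "q * (p - 2) * E \<ge> 0" using pq E0 by simp
      ultimately show ?thesis by linarith
    qed
    have "2 * p * q > 0" using pq by simp
    then show ?thesis using eq pos by (metis zero_less_mult_iff not_less_iff_gr_or_eq)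
  next
    case True
    show ?thesis
    proof (rule ccontr)
      assume "\<not> II \<Omega> a b p q lam u > 0"
      then have le: "E / 2 - A / p - (lam * B) / q \<le> 0" unfolding II by simp
      define s where "s = lam * B"
      have s: "s > 0" using True lam by (simp add: s_def)
      have nm: "E > s * (p - q) / (p - 2)" using NM by (simp add: s_def mult.commute mult.left_commute)
      have "s * (p - q) / (p - 2) > 0" using s pq by simp
      then have E: "E > 0" using nm by linarith
      have "s * (p - q) / (p - 2) \<ge> s" using s pq by (simp add: field_simps)
      then have sE: "s < E" using nm by linarith
      have Aeq: "A = E - s" using NE by (simp add: s_def)
      have A: "A > 0" using sE Aeq by simp
      define r where "r = (2 - q) / (p - 2)"
      have r: "r > 0" using pq by (simp add: r_def)
      have key: "Cpq p q * E powr (1 + r) \<le> s * A powr r"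
        unfolding r_def by (rule key_ineq[OF pq E s Aeq nm]) (use le in \<open>simp add: s_def\<close>)
      have C: "Cpq p q > 0" using pq by (simp add: Cpq_def)
      define \<gamma> where "\<gamma> = 2 * (p - q) / (p - 2)"
      have \<gamma>: "\<gamma> > 0" using pq by (simp add: \<gamma>_def)
      have \<gamma>eq: "\<gamma> = q + p * r" using pq by (simp add: \<gamma>_def r_def field_simps)
      have \<rho>eq: "2 * (1 + r) = \<gamma>" using pq by (simp add: \<gamma>_def r_def field_simps)
      define K where "K = Cpq p q / (B * A powr r)"
      have K: "K > 0" using C True A by (simp add: K_def)
      define t where "t = K powr (1 / \<gamma>)"
      have t: "t > 0" using K by (simp add: t_def)
      have t\<gamma>: "t powr \<gamma> = K" using K \<gamma> by (simp add: t_def powr_powr)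
      define v where "v = (\<lambda>x. t * u x)"
      have vH: "v \<in> H1 \<Omega>" unfolding v_def by (rule H1_scale[OF uH])
      have Ev: "EE \<Omega> v = t powr 2 * E"
        using EE_scale[OF op lm uH, of t] t by (simp add: v_def E_def powr_realpow)
      have Av: "AA \<Omega> a p v = t powr p * A" using AA_scale[OF t] by (simp add: v_def A_def)
      have Bv: "BB \<Omega> b q v = t powr q * B" using BB_scale[OF t] by (simp add: v_def B_def)
      have con: "BB \<Omega> b q v * AA \<Omega> a p v powr r = Cpq p q"
      proof -
        have "BB \<Omega> b q v * AA \<Omega> a p v powr r = t powr q * B * (t powr (p * r) * A powr r)"
          using t A by (simp add: Av Bv powr_mult powr_powr)
        also have "\<dots> = t powr (q + p * r) * (B * A powr r)"
          by (simp add: powr_add)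
        also have "\<dots> = K * (B * A powr r)" using t\<gamma> \<gamma>eq by simp
        also have "\<dots> = Cpq p q" using True A by (simp add: K_def)
        finally show ?thesis .
      qed
      have mem: "ereal (EE \<Omega> v powr ((p - q) / (p - 2))) \<in> {ereal (EE \<Omega> u powr ((p - q) / (p - 2))) | u.
        u \<in> H1 \<Omega> \<and> EE \<Omega> u > 0 \<and> AA \<Omega> a p u > 0 \<and> BB \<Omega> b q u > 0 \<and>
        BB \<Omega> b q u * AA \<Omega> a p u powr ((2 - q) / (p - 2)) / Cpq p q = 1}"
      proof -
        have "EE \<Omega> v > 0" using Ev t E by simp
        moreover have "AA \<Omega> a p v > 0" using Av t A by simp
        moreover have "BB \<Omega> b q v > 0" using Bv t True by simp
        moreover have "BB \<Omega> b q v * AA \<Omega> a p v powr ((2 - q) / (p - 2)) / Cpq p q = 1"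
          using con C unfolding r_def by simp
        ultimately show ?thesis using vH by blast
      qed
      then have "lambda0 \<Omega> a b p q \<le> ereal (EE \<Omega> v powr ((p - q) / (p - 2)))"
        unfolding lambda0_def by (rule Inf_lower)
      then have "ereal lam < ereal (EE \<Omega> v powr ((p - q) / (p - 2)))"
        using assms(13) by (rule order.strict_trans2[rotated])
      then have lt: "lam < EE \<Omega> v powr ((p - q) / (p - 2))" by simp
      have "(p - q) / (p - 2) = 1 + r" using pq by (simp add: r_def field_simps)
      moreover have tt: "(t powr 2) powr (1 + r) = t powr (2 * (1 + r))" by (simp add: powr_powr)
      moreover have "(t powr 2 * E) powr (1 + r) = (t powr 2) powr (1 + r) * E powr (1 + r)"
        using t E by (intro powr_mult)
      ultimately have "EE \<Omega> v powr ((p - q) / (p - 2)) = t powr (2 * (1 + r)) * E powr (1 + r)"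
        unfolding Ev by simp
      also have "\<dots> = K * E powr (1 + r)" using \<rho>eq t\<gamma> by simp
      finally have "lam < Cpq p q / (B * A powr r) * E powr (1 + r)" using lt by (simp add: K_def)
      then have "lam * (B * A powr r) < Cpq p q * E powr (1 + r)"
        using True A by (simp add: field_simps)
      then show False using key by (simp add: s_def mult.assoc)
    qed
  qed
qed

end
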